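(* Let $L\ge1$, $k\ge2$ be integers with $k\mid L$, let $r$ be a positive integer, $p$ a positive integer, $l_j=(j-1)\frac Lk+1$ for $j=1,\dots,k$ and $l_{k+1}=2L$. Let $u\in\{1,\dots,k-1\}$, let $m_u$ be an $(l_{u+1}+2-l_u)$-bit string and $m'_{u+1}$ a $(2L+p+2-l_{u+1})$-bit string, and suppose that for some $s_0\in\{0,1,\dots,r-1\}$, $$\Big|m'_{u+1}-\big(\tfrac{s_0}{r}\big)_{\{l_{u+1},2L+1+p\}}\Big|<2^p,\qquad (m'_{u+1})_{[1,2]}=\big(\tfrac{s_0}{r}\big)_{\{l_{u+1},l_{u+1}+1\}},$$ and $$d_{l_{u+1}+2-l_u}\Big(m_u,\big(\tfrac{s_0}{r}\big)_{\{l_u,l_{u+1}+1\}}\Big)\le 1.$$ Then there exists $c_u\in\{-1,0,1\}$ such that (the integer formed by the last two bits of $m_u$)$+c_u\equiv (m'_{u+1})_{[1,2]}\pmod 4$, and for any such $c_u$, letting $prefix_u=(m_u+c_u)\bmod 2^{l_{u+1}+2-l_u}$ (as an $(l_{u+1}+2-l_u)$-bit string) and $m'_u=prefix_u\circ(m'_{u+1})_{[3,\,2L+p+2-l_{u+1}]}$, we have $$\Big|m'_u-\big(\tfrac{s_0}{r}\big)_{\{l_u,2L+1+p\}}\Big|<2^p\quad\text{and}\quad (m'_u)_{[1,2]}=\big(\tfrac{s_0}{r}\big)_{\{l_u,l_u+1\}}.$$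
   Context: Bit strings are identified with the binary integers they represent (most significant bit first); $\circ$ denotes concatenation of bit strings. For a bit string $x=x_1\cdots x_n$, $x_{[i,j]}=x_i\cdots x_j$. For real $\omega$ with binary fractional expansion $0.b_1b_2\cdots$ (not ending in infinitely many 1's), $\omega_{\{i,j\}}=b_i\cdots b_j$. For two $t$-bit strings $x,y$, $d_t(x,y)=\min(|x-y|,2^t-|x-y|)$. The construction of $m'_u$ from $m_u$ and $m'_{u+1}$ is one step of the classical correction procedure CombineResults. *)

theory Defs
  imports Complex_Main
begin

text \<open>Bit strings are integers; a t-bit string x satisfies 0 \<le> x < 2^t.\<close>

definition is_bits :: "nat \<Rightarrow> int \<Rightarrow> bool" where
  "is_bits t x \<longleftrightarrow> 0 \<le> x \<and> x < 2 ^ t"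

text \<open>x_{[i,j]} for an n-bit string x (bits numbered 1..n, most significant first).\<close>
definition substr :: "nat \<Rightarrow> int \<Rightarrow> nat \<Rightarrow> nat \<Rightarrow> int" where
  "substr n x i j = (x div 2 ^ (n - j)) mod 2 ^ (j + 1 - i)"

text \<open>omega_{i,j} = b_i ... b_j of the binary expansion 0.b_1 b_2 ... (not ending in
  infinitely many 1's) of a real omega in [0,1).\<close>
definition frac_bits :: "real \<Rightarrow> nat \<Rightarrow> nat \<Rightarrow> int" where
  "frac_bits \<omega> i j = \<lfloor>2 ^ j * \<omega>\<rfloor> mod 2 ^ (j + 1 - i)"

definition concat_bits :: "int \<Rightarrow> int \<Rightarrow> nat \<Rightarrow> int" where
  "concat_bits x y ny = x * 2 ^ ny + y"

definition dist_t :: "nat \<Rightarrow> int \<Rightarrow> int \<Rightarrow> int" where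
  "dist_t t x y = min \<bar>x - y\<bar> (2 ^ t - \<bar>x - y\<bar>)"

definition lpos :: "nat \<Rightarrow> nat \<Rightarrow> nat \<Rightarrow> nat" where
  "lpos L k j = (if j = k + 1 then 2 * L else (j - 1) * (L div k) + 1)"

end

theory Submission imports Defs begin

lemma Fshift: "\<lfloor>2 ^ (j + t) * (w::real)\<rfloor> div 2 ^ t = \<lfloor>2 ^ j * w\<rfloor>"
proof -
  have "\<lfloor>2 ^ (j + t) * w\<rfloor> div 2 ^ t = \<lfloor>2 ^ (j + t) * w / real_of_int (2 ^ t)\<rfloor>"
    by (rule floor_divide_real_eq_div[symmetric]) simp
  also have "2 ^ (j + t) * w / real_of_int (2 ^ t) = 2 ^ j * w"
    by (simp add: power_add)
  finally show ?thesis .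
qed

lemma minlem:
  fixes x Q :: int
  assumes "\<bar>x\<bar> < Q" "min \<bar>x\<bar> (Q - \<bar>x\<bar>) \<le> 1"
  shows "x = -1 \<or> x = 0 \<or> x = 1 \<or> x = Q - 1 \<or> x = 1 - Q"
  using assms unfolding min_def by (cases "\<bar>x\<bar> \<le> Q - \<bar>x\<bar>"; simp; arith)

lemma c_uniq:
  fixes x c e :: int
  assumes "c \<in> {-1,0,1}" "e \<in> {-1,0,1}" "(x + c) mod 4 = (x + e) mod 4"
  shows "c = e"
proof -
  have a: "x + c = 4 * ((x + c) div 4) + (x + c) mod 4" by simp
  have b: "x + e = 4 * ((x + e) div 4) + (x + e) mod 4" by simp
  have "c - e = 4 * ((x + c) div 4) - 4 * ((x + e) div 4)" using a b assms(3) by linarith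
  then have "c - e = 4 * ((x + c) div 4 - (x + e) div 4)" by (simp add: right_diff_distrib)
  moreover have "-2 \<le> c - e" "c - e \<le> 2" using assms(1,2) by auto
  ultimately show ?thesis by presburger
qed

lemma generic:
  fixes w :: real and a d b N p :: nat and mu m :: int
  assumes bd: "b = a + d" and bN: "b + 1 \<le> N"
    and mub: "is_bits (d + 2) mu"
    and mb: "is_bits (N + 1 - b) m"
    and h1: "\<bar>m - frac_bits w b N\<bar> < 2 ^ p"
    and h2: "substr (N + 1 - b) m 1 2 = frac_bits w b (b + 1)"
    and h3: "dist_t (d + 2) mu (frac_bits w a (b + 1)) \<le> 1"
  shows "(\<exists>c \<in> {-1, 0, 1::int}. (mu mod 4 + c) mod 4
              = substr (N + 1 - b) m 1 2 mod 4)
       \<and> (\<forall>c \<in> {-1, 0, 1::int}. (mu mod 4 + c) mod 4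
              = substr (N + 1 - b) m 1 2 mod 4 \<longrightarrow>
            (let n\<^sub>u = d + 2;
                 prefix = (mu + c) mod 2 ^ n\<^sub>u;
                 suffix = substr (N + 1 - b) m 3 (N + 1 - b);
                 m'_u = concat_bits prefix suffix (N - 1 - b)
             in \<bar>m'_u - frac_bits w a N\<bar> < 2 ^ p
                \<and> substr (N + 1 - a) m'_u 1 2
                    = frac_bits w a (a + 1)))"
proof -
  define F where "F j = \<lfloor>2 ^ j * w\<rfloor>" for j :: nat
  have Fs: "F (j + t) div 2 ^ t = F j" for j t unfolding F_def by (rule Fshift)
  define K :: int where "K = 2 ^ (N - 1 - b)"
  have Kpos: "K > 0" unfolding K_def by simp
  define T2 where "T2 = F (b + 1) mod 2 ^ (d + 2)"
  have T2eq: "frac_bits w a (b + 1) = T2"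
    unfolding frac_bits_def T2_def F_def using bd by (simp add: add.commute)
  have T2b: "0 \<le> T2" "T2 < 2 ^ (d+2)" unfolding T2_def by simp_all
  have FNK: "F N div K = F (b + 1)"
    using Fs[of "b+1" "N - 1 - b"] bN unfolding K_def by simp
  have top: "m div K mod 4 = F (b + 1) mod 4"
  proof -
    have "N + 1 - b - 2 = N - 1 - b" by simp
    then show ?thesis using h2 unfolding substr_def frac_bits_def F_def K_def
      by (simp add: add.commute)
  qed
  have NB: "N + 1 - b = (N - 1 - b) + 2" using bN by simp
  have P4: "(2::int) ^ (N + 1 - b) = K * 4" unfolding K_def NB by (simp add: power_add)
  have m4K: "m < 4 * K" using mb P4 unfolding is_bits_def by simp
  have mdivK: "m div K = F (b + 1) mod 4"
  proof -
    have "0 \<le> m div K" using mb Kpos unfolding is_bits_def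
      by (simp add: pos_imp_zdiv_nonneg_iff)
    moreover have "m div K < 4"
    proof (rule ccontr)
      assume "\<not> m div K < 4"
      then have "K * 4 \<le> K * (m div K)" using Kpos by simp
      moreover have "K * (m div K) \<le> m" using Kpos
        by (metis div_mult_mod_eq le_add_same_cancel1 mult.commute pos_mod_sign)
      ultimately show False using m4K by simp
    qed
    ultimately show ?thesis using top by simp
  qed
  have T1: "frac_bits w b N = K * (F (b+1) mod 4) + F N mod K"
  proof -
    have "frac_bits w b N = F N mod (K * 4)"
      unfolding frac_bits_def F_def using P4 by simp
    also have "\<dots> = K * (F N div K mod 4) + F N mod K" by (rule zmod_zmult2_eq) simp
    finally show ?thesis using FNK by simp
  qed
  have mdec: "m = K * (F (b+1) mod 4) + m mod K" using mdivK
    by (metis div_mult_mod_eq mult.commute)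
  have diff: "\<bar>m mod K - F N mod K\<bar> < 2 ^ p" using h1 T1 mdec by linarith
  obtain e where e: "e \<in> {-1,0,1::int}" "(mu + e) mod 2 ^ (d+2) = T2"
  proof -
    have "min \<bar>mu - T2\<bar> (2 ^ (d+2) - \<bar>mu - T2\<bar>) \<le> 1" using h3 T2eq unfolding dist_t_def by simp
    moreover have "0 \<le> mu" "mu < 2^(d+2)" using mub unfolding is_bits_def by simp_all
    ultimately consider "mu - T2 = -1" | "mu - T2 = 0" | "mu - T2 = 1" | "mu - T2 = 2^(d+2) - 1"
       | "mu - T2 = 1 - 2^(d+2)" using minlem[of "mu - T2" "2^(d+2)"] T2b by linarith
    then show ?thesis
    proof cases
      case 1 then show ?thesis using that[of 1] T2b by simp
    next
      case 2 then show ?thesis using that[of 0] T2b by simp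
    next
      case 3 then show ?thesis using that[of "-1"] T2b by simp
    next
      case 4
      then have "mu + 1 = T2 + 2^(d+2)" by simp
      then show ?thesis using that[of 1] T2b by simp
    next
      case 5
      then have "mu + -1 = T2 - 2^(d+2)" by simp
      then have "(mu + -1) mod 2^(d+2) = T2" using T2b
        by (simp add: minus_mod_self2 mod_pos_pos_trivial)
      then show ?thesis using that[of "-1"] by simp
    qed
  qed
  have d4: "(4::int) dvd 2 ^ (d+2)" by (simp add: power_add)
  have S: "substr (N + 1 - b) m 1 2 mod 4 = F (b+1) mod 4"
    using h2 unfolding frac_bits_def F_def by (simp add: add.commute)
  have emod: "(mu + e) mod 4 = F (b+1) mod 4"
  proof -
    have "(mu + e) mod 4 = ((mu + e) mod 2 ^ (d+2)) mod 4" using d4 by (simp add: mod_mod_cancel)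
    also have "\<dots> = F (b+1) mod 4" using e(2) d4 unfolding T2_def by (simp add: mod_mod_cancel)
    finally show ?thesis .
  qed
  show ?thesis
  proof
    show "\<exists>c \<in> {-1, 0, 1::int}. (mu mod 4 + c) mod 4 = substr (N + 1 - b) m 1 2 mod 4"
      using e emod S by (metis mod_add_left_eq)
  next
    show "\<forall>c \<in> {-1, 0, 1::int}. (mu mod 4 + c) mod 4
              = substr (N + 1 - b) m 1 2 mod 4 \<longrightarrow>
            (let n\<^sub>u = d + 2;
                 prefix = (mu + c) mod 2 ^ n\<^sub>u;
                 suffix = substr (N + 1 - b) m 3 (N + 1 - b);
                 m'_u = concat_bits prefix suffix (N - 1 - b)
             in \<bar>m'_u - frac_bits w a N\<bar> < 2 ^ p
                \<and> substr (N + 1 - a) m'_u 1 2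
                    = frac_bits w a (a + 1))"
    proof (intro ballI impI)
      fix c :: int assume c: "c \<in> {-1,0,1}" and hc: "(mu mod 4 + c) mod 4 = substr (N + 1 - b) m 1 2 mod 4"
      have "(mu + c) mod 4 = (mu + e) mod 4" using hc S emod by (metis mod_add_left_eq)
      then have ce: "c = e" using c e(1) c_uniq by blast
      have pre: "(mu + c) mod 2 ^ (d+2) = T2" using ce e by simp
      have suf: "substr (N + 1 - b) m 3 (N + 1 - b) = m mod K"
        unfolding substr_def K_def by (simp add: numeral_3_eq_3)
      define mu' where "mu' = K * T2 + m mod K"
      have cat: "concat_bits T2 (m mod K) (N - 1 - b) = mu'"
        unfolding concat_bits_def mu'_def K_def by simp
      have tgt: "frac_bits w a N = K * T2 + F N mod K"
      proof -
        have "N + 1 - a = (N - 1 - b) + (d + 2)" using bd bN by simp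
        then have "frac_bits w a N = F N mod (K * 2 ^ (d+2))"
          unfolding frac_bits_def F_def K_def by (simp add: power_add mult_ac)
        also have "\<dots> = K * (F N div K mod 2 ^ (d+2)) + F N mod K" by (rule zmod_zmult2_eq) simp
        finally show ?thesis using FNK T2_def by simp
      qed
      have A: "\<bar>mu' - frac_bits w a N\<bar> < 2 ^ p" using tgt diff unfolding mu'_def by simp
      have mu'div: "mu' div K = T2" unfolding mu'_def using Kpos by simp
      have B: "substr (N + 1 - a) mu' 1 2 = frac_bits w a (a + 1)"
      proof -
        have "N + 1 - a - 2 = (N - 1 - b) + d" using bd bN by simp
        then have "substr (N + 1 - a) mu' 1 2 = mu' div (K * 2 ^ d) mod 4"
          unfolding substr_def K_def by (simp add: power_add)
        also have "\<dots> = T2 div 2 ^ d mod 4" using mu'div by (simp add: zdiv_zmult2_eq)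
        also have "T2 div 2 ^ d mod 4 = F (b+1) div 2 ^ d mod 4"
        proof -
          have p4: "(2::int) ^ (d + 2) = 2 ^ d * 4" by (simp add: power_add)
          have "T2 = F (b+1) mod (2 ^ d * 4)" unfolding T2_def p4 by (rule refl)
          also have "\<dots> = 2 ^ d * (F (b+1) div 2 ^ d mod 4) + F (b+1) mod 2 ^ d" by (rule zmod_zmult2_eq) simp
          finally have "T2 = 2 ^ d * (F (b+1) div 2 ^ d mod 4) + F (b+1) mod 2 ^ d" .
          then have "T2 div 2 ^ d = F (b+1) div 2 ^ d mod 4" by simp
          then show ?thesis by simp
        qed
        also have "F (b+1) div 2 ^ d = F (a + 1)" using Fs[of "a+1" d] bd by (simp add: add.commute add.left_commute)
        also have "F (a + 1) mod 4 = frac_bits w a (a + 1)" unfolding frac_bits_def F_def by simp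
        finally show ?thesis .
      qed
      show "let n\<^sub>u = d + 2;
                 prefix = (mu + c) mod 2 ^ n\<^sub>u;
                 suffix = substr (N + 1 - b) m 3 (N + 1 - b);
                 m'_u = concat_bits prefix suffix (N - 1 - b)
             in \<bar>m'_u - frac_bits w a N\<bar> < 2 ^ p
                \<and> substr (N + 1 - a) m'_u 1 2
                    = frac_bits w a (a + 1)"
        using A B pre suf cat by (simp add: Let_def)
    qed
  qed
qed

theorem proposition4:
  fixes L k r p u s0 :: nat and m_u m'_u1 :: int
  assumes "L \<ge> 1" and "k \<ge> 2" and "k dvd L" and "r > 0" and "p > 0"
    and "1 \<le> u" and "u \<le> k - 1"
    and "is_bits (lpos L k (u+1) + 2 - lpos L k u) m_u"
    and "is_bits (2*L + p + 2 - lpos L k (u+1)) m'_u1"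
    and "s0 < r"
    and "\<bar>m'_u1 - frac_bits (real s0 / real r) (lpos L k (u+1)) (2*L+1+p)\<bar> < 2 ^ p"
    and "substr (2*L + p + 2 - lpos L k (u+1)) m'_u1 1 2
           = frac_bits (real s0 / real r) (lpos L k (u+1)) (lpos L k (u+1) + 1)"
    and "dist_t (lpos L k (u+1) + 2 - lpos L k u) m_u
           (frac_bits (real s0 / real r) (lpos L k u) (lpos L k (u+1) + 1)) \<le> 1"
  shows "(\<exists>c \<in> {-1, 0, 1::int}. (m_u mod 4 + c) mod 4
              = substr (2*L + p + 2 - lpos L k (u+1)) m'_u1 1 2 mod 4)
       \<and> (\<forall>c \<in> {-1, 0, 1::int}. (m_u mod 4 + c) mod 4
              = substr (2*L + p + 2 - lpos L k (u+1)) m'_u1 1 2 mod 4 \<longrightarrow>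
            (let n\<^sub>u = lpos L k (u+1) + 2 - lpos L k u;
                 prefix = (m_u + c) mod 2 ^ n\<^sub>u;
                 suffix = substr (2*L + p + 2 - lpos L k (u+1)) m'_u1 3
                            (2*L + p + 2 - lpos L k (u+1));
                 m'_u = concat_bits prefix suffix (2*L + p - lpos L k (u+1))
             in \<bar>m'_u - frac_bits (real s0 / real r) (lpos L k u) (2*L+1+p)\<bar> < 2 ^ p
                \<and> substr (2*L + p + 2 - lpos L k u) m'_u 1 2
                    = frac_bits (real s0 / real r) (lpos L k u) (lpos L k u + 1)))"
proof -
  note A = assms
  define d where "d = L div k"
  have Ld: "L = k * d" using assms(3) unfolding d_def by simp
  have d1: "d \<ge> 1" using Ld assms(1) by (cases d) auto
  define a where "a = lpos L k u"
  define b where "b = lpos L k (u+1)"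
  define N where "N = 2*L+1+p"
  have ua: "a = (u - 1) * d + 1" unfolding a_def lpos_def d_def using assms(2,7) by auto
  have ub: "b = u * d + 1" unfolding b_def lpos_def d_def using assms(2,7) by auto
  have bd: "b = a + d" using ua ub assms(6) by (cases u) auto
  have "u * d \<le> (k - 1) * d" using assms(7) by simp
  also have "\<dots> \<le> L" using Ld by (simp add: diff_mult_distrib)
  finally have bL: "b \<le> L + 1" using ub by simp
  have bN: "b + 1 \<le> N" using bL assms(1) assms(5) unfolding N_def by simp
  have e1: "b + 2 - a = d + 2" using bd by simp
  have e2: "2*L + p + 2 - b = N + 1 - b" unfolding N_def by simp
  have e3: "2*L + p - b = N - 1 - b" unfolding N_def by simp
  have e4: "2*L + p + 2 - a = N + 1 - a" unfolding N_def by simp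
  have e5: "2*L+1+p = N" unfolding N_def by simp
  have G: ?thesis if "(\<exists>c \<in> {-1, 0, 1::int}. (m_u mod 4 + c) mod 4
              = substr (N + 1 - b) m'_u1 1 2 mod 4)
       \<and> (\<forall>c \<in> {-1, 0, 1::int}. (m_u mod 4 + c) mod 4
              = substr (N + 1 - b) m'_u1 1 2 mod 4 \<longrightarrow>
            (let n\<^sub>u = d + 2;
                 prefix = (m_u + c) mod 2 ^ n\<^sub>u;
                 suffix = substr (N + 1 - b) m'_u1 3 (N + 1 - b);
                 m'_u = concat_bits prefix suffix (N - 1 - b)
             in \<bar>m'_u - frac_bits (real s0 / real r) a N\<bar> < 2 ^ p
                \<and> substr (N + 1 - a) m'_u 1 2
                    = frac_bits (real s0 / real r) a (a + 1)))"
    using that unfolding a_def[symmetric] b_def[symmetric] unfolding e1 e2 e3 e4 e5 .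
  show ?thesis
    apply (rule G)
    apply (rule generic[OF bd bN])
    using assms(8,9,11,12,13) unfolding a_def[symmetric] b_def[symmetric] unfolding e1 e2 e5 by simp_all
qed

end
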